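(* Let $0\le\epsilon<1/8$, let $v\in\mathbb R^n$ with $\|v\|=1$, and let $Q^*\subseteq[n]$ with $1\le|Q^*|\le n/2$. If $\left\|\bar{\mathbf 1}_{Q^*}/\|\bar{\mathbf 1}_{Q^*}\| - v\right\|^2\le\epsilon$, then, with $Q=\{i\in[n]: v_i\ge \frac{1}{2\sqrt{2|Q^*|}}\}$, $$|Q\,\triangle\,Q^*| = \|\mathbf 1_Q-\mathbf 1_{Q^*}\|^2 \le \frac{8\epsilon|Q|}{1-8\epsilon}.$$
   Context: $\mathbf 1_Q\in\{0,1\}^n$ is the indicator vector of $Q$, $\bar x=x-\frac{\langle x,\mathbf1\rangle}{n}\mathbf1$ for $x\in\mathbb R^n$, $\|\cdot\|$ is the Euclidean norm, and $\triangle$ is symmetric difference. *)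

theory Defs
  imports Complex_Main
begin

text \<open>Vectors in R^n are functions nat => real, considered on the index set [n] = {1..n}.\<close>

definition indvec :: "nat set \<Rightarrow> nat \<Rightarrow> real" where
  "indvec Q i = (if i \<in> Q then 1 else 0)"

definition center :: "nat \<Rightarrow> (nat \<Rightarrow> real) \<Rightarrow> nat \<Rightarrow> real" where
  "center n x i = x i - (\<Sum>j\<in>{1..n}. x j) / real n"

definition vnorm :: "nat \<Rightarrow> (nat \<Rightarrow> real) \<Rightarrow> real" where
  "vnorm n x = sqrt (\<Sum>i\<in>{1..n}. (x i)\<^sup>2)"

end

theory Submission
  imports Defs
begin

theorem lemma6p3:
  fixes n :: nat and \<epsilon> :: real and v :: "nat \<Rightarrow> real" and Qs :: "nat set"
  assumes eps: "0 \<le> \<epsilon>" "\<epsilon> < 1/8"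
    and vn: "vnorm n v = 1"
    and Qs_sub: "Qs \<subseteq> {1..n}"
    and Qs_card: "1 \<le> card Qs" "real (card Qs) \<le> real n / 2"
    and close: "(vnorm n (\<lambda>i. center n (indvec Qs) i / vnorm n (center n (indvec Qs)) - v i))\<^sup>2 \<le> \<epsilon>"
  shows "let Q = {i \<in> {1..n}. v i \<ge> 1 / (2 * sqrt (2 * real (card Qs)))} in
           real (card ((Q - Qs) \<union> (Qs - Q))) = (vnorm n (\<lambda>i. indvec Q i - indvec Qs i))\<^sup>2
         \<and> real (card ((Q - Qs) \<union> (Qs - Q))) \<le> 8 * \<epsilon> * real (card Q) / (1 - 8 * \<epsilon>)"
proof -
  define S where "S = {1..n}"
  define k where "k = real (card Qs)"
  define t where "t = 1 / (2 * sqrt (2 * k))"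
  define Q where "Q = {i \<in> S. v i \<ge> t}"
  define D where "D = (Q - Qs) \<union> (Qs - Q)"
  have finS: "finite S" unfolding S_def by simp
  have QS: "Q \<subseteq> S" unfolding Q_def by auto
  have QsS: "Qs \<subseteq> S" using Qs_sub S_def by simp
  have DS: "D \<subseteq> S" using QS QsS D_def by auto
  have finD: "finite D" using DS finS finite_subset by blast
  have finQ: "finite Q" using QS finS finite_subset by blast
  have finQs: "finite Qs" using QsS finS finite_subset by blast
  have kpos: "k \<ge> 1" using Qs_card k_def by simp
  have npos: "real n > 0" using Qs_card by linarith
  define a where "a = k / real n"
  have a_le: "a \<le> 1/2" using Qs_card npos unfolding a_def k_def by (simp add: divide_simps)
  have a_nn: "a \<ge> 0" unfolding a_def k_def by simp
  have part1: "real (card D) = (vnorm n (\<lambda>i. indvec Q i - indvec Qs i))\<^sup>2"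
  proof -
    have "(\<Sum>i\<in>S. (indvec Q i - indvec Qs i)\<^sup>2) = (\<Sum>i\<in>S. if i \<in> D then 1 else 0)"
      by (rule sum.cong) (auto simp: indvec_def D_def)
    also have "\<dots> = real (card {i \<in> S. i \<in> D})"
      using sum.inter_filter[OF finS, of "\<lambda>_. (1::real)" "\<lambda>i. i \<in> D", symmetric] by simp
    also have "{i \<in> S. i \<in> D} = D" using DS by auto
    finally have "(\<Sum>i\<in>S. (indvec Q i - indvec Qs i)\<^sup>2) = real (card D)" .
    moreover have "(\<Sum>i\<in>S. (indvec Q i - indvec Qs i)\<^sup>2) \<ge> 0" by (rule sum_nonneg) simp
    ultimately show ?thesis unfolding vnorm_def S_def[symmetric] by simp
  qed
  have sumI: "(\<Sum>j\<in>S. indvec Qs j) = k"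
  proof -
    have "(\<Sum>j\<in>S. indvec Qs j) = (\<Sum>j\<in>S. if j \<in> Qs then 1 else 0)"
      by (simp add: indvec_def)
    also have "\<dots> = real (card {j \<in> S. j \<in> Qs})"
      using sum.inter_filter[OF finS, of "\<lambda>_. (1::real)" "\<lambda>i. i \<in> Qs", symmetric] by simp
    also have "{j \<in> S. j \<in> Qs} = Qs" using QsS by auto
    finally show ?thesis using k_def by simp
  qed
  have cdef: "\<And>i. center n (indvec Qs) i = indvec Qs i - a"
    unfolding center_def a_def using sumI S_def by simp
  define N where "N = vnorm n (center n (indvec Qs))"
  have sq: "(\<Sum>i\<in>S. (indvec Qs i - a)\<^sup>2) = k * (1 - a)"
  proof -
    have "(\<Sum>i\<in>S. (indvec Qs i - a)\<^sup>2) = (\<Sum>i\<in>S. indvec Qs i - 2 * a * indvec Qs i + a\<^sup>2)"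
      by (rule sum.cong) (auto simp: indvec_def power2_eq_square algebra_simps)
    also have "\<dots> = k - 2 * a * k + real n * a\<^sup>2"
      using sumI by (simp add: sum.distrib sum_subtractf sum_distrib_left[symmetric] S_def)
    also have "\<dots> = k * (1 - a)" using npos unfolding a_def by (simp add: field_simps power2_eq_square)
    finally show ?thesis .
  qed
  have Ndef: "N = sqrt (k * (1 - a))"
    unfolding N_def vnorm_def using cdef sq S_def by simp
  have Npos: "N > 0" unfolding Ndef using kpos a_le by simp
  have key: "1 / sqrt (2 * k) \<le> (1 - a) / N"
  proof -
    have "N \<le> (1 - a) * sqrt (2 * k)"
    proof -
      have "(1 - a) * sqrt (2 * k) = sqrt ((1 - a)\<^sup>2 * (2 * k))"
        using a_le by (simp add: real_sqrt_mult)
      moreover have "k * (1 - a) \<le> (1 - a)\<^sup>2 * (2 * k)"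
      proof -
        have "k * (1 - a) * 1 \<le> k * (1 - a) * (2 * (1 - a))"
          using a_le kpos by (intro mult_left_mono) auto
        thus ?thesis by (simp add: power2_eq_square algebra_simps)
      qed
      ultimately show ?thesis unfolding Ndef by simp
    qed
    moreover have "sqrt (2 * k) > 0" using kpos by simp
    ultimately show ?thesis using Npos by (simp add: divide_simps mult.commute)
  qed
  have t2: "t\<^sup>2 = 1 / (8 * k)" unfolding t_def using kpos
    by (simp add: power2_eq_square power_divide)
  have tpos: "t > 0" unfolding t_def using kpos by simp
  have twot: "2 * t = 1 / sqrt (2 * k)" unfolding t_def by simp
  define f where "f i = (center n (indvec Qs) i / N - v i)\<^sup>2" for i
  have E: "(\<Sum>i\<in>S. f i) \<le> \<epsilon>"
  proof -
    have "(\<Sum>i\<in>S. f i) \<ge> 0" unfolding f_def by (rule sum_nonneg) simp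
    thus ?thesis using close unfolding vnorm_def f_def N_def S_def by simp
  qed
  have termD: "\<And>i. i \<in> D \<Longrightarrow> t\<^sup>2 \<le> f i"
  proof -
    fix i assume iD: "i \<in> D"
    show "t\<^sup>2 \<le> f i"
    proof (cases "i \<in> Qs")
      case True
      then have iQ: "i \<notin> Q" using iD D_def by auto
      have "v i < t" using iQ True QsS Q_def by auto
      moreover have "center n (indvec Qs) i / N = (1 - a) / N" using True cdef indvec_def by simp
      ultimately have "t \<le> center n (indvec Qs) i / N - v i" using key twot by linarith
      thus ?thesis unfolding f_def using tpos by (simp add: power_mono)
    next
      case False
      then have iQ: "i \<in> Q" using iD D_def by auto
      have "v i \<ge> t" using iQ Q_def by auto
      moreover have "center n (indvec Qs) i / N = - a / N" using False cdef indvec_def by simp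
      moreover have "- a / N \<le> 0" using a_nn Npos by simp
      ultimately have "t \<le> v i - center n (indvec Qs) i / N" by linarith
      hence "t\<^sup>2 \<le> (v i - center n (indvec Qs) i / N)\<^sup>2" using tpos by (simp add: power_mono)
      thus ?thesis unfolding f_def by (simp add: power2_commute)
    qed
  qed
  have "real (card D) * t\<^sup>2 \<le> (\<Sum>i\<in>D. f i)"
    using sum_mono[of D "\<lambda>_. t\<^sup>2" f] termD by simp
  also have "\<dots> \<le> (\<Sum>i\<in>S. f i)"
    by (rule sum_mono2[OF finS DS]) (simp add: f_def)
  also have "\<dots> \<le> \<epsilon>" by (rule E)
  finally have "real (card D) / (8 * k) \<le> \<epsilon>" using t2 by simp
  hence Dk: "real (card D) \<le> 8 * \<epsilon> * k" using kpos by (simp add: divide_simps algebra_simps)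
  have "Qs \<subseteq> Q \<union> D" unfolding D_def by auto
  hence "card Qs \<le> card (Q \<union> D)" using finQ finD by (intro card_mono) auto
  also have "\<dots> \<le> card Q + card D" by (rule card_Un_le)
  finally have kQD: "k \<le> real (card Q) + real (card D)" unfolding k_def by linarith
  have "real (card D) \<le> 8 * \<epsilon> * (real (card Q) + real (card D))"
    using Dk kQD eps by (meson mult_left_mono order_trans zero_le_mult_iff zero_le_numeral)
  hence "real (card D) * (1 - 8 * \<epsilon>) \<le> 8 * \<epsilon> * real (card Q)" by (simp add: algebra_simps)
  hence part2: "real (card D) \<le> 8 * \<epsilon> * real (card Q) / (1 - 8 * \<epsilon>)"
    using eps by (simp add: pos_le_divide_eq)
  show ?thesis using part1 part2 unfolding Let_def Q_def D_def t_def S_def k_def by simp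
qed

end
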